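(* For every Tychonoff space $X$, the following are equivalent: (1) $C_p(X)\models U_{fin}(\Gamma_f,\Gamma_f)$ for every $f\in C_p(X)$; (2) $X\models U_{fin}(\Gamma_F,\Gamma)$.
   Context: All spaces are Tychonoff; $C_p(X)$ is $C(X)$ with pointwise convergence topology. For $f\in C_p(X)$, $\Gamma_f$ is the family of infinite $A\subseteq C(X)$ with $f\notin A$ such that every neighbourhood of $f$ contains all but finitely many elements of $A$. $C_p(X)\models U_{fin}(\Gamma_f,\Gamma_f)$ means: for every sequence $(S_n)_{n\in\omega}$ of elements of $\Gamma_f$ there are finite $\mathcal F_n\subseteq S_n$ such that for every finite $K=\{x_1,\dots,x_k\}\subseteq X$ and $\varepsilon>0$ there is $n'$ such that for every $n>n'$ and each $j\le k$ some $g\in\mathcal F_n$ satisfies $|g(x_j)-f(x_j)|<\varepsilon$. Zero-set: $g^{-1}(0)$, $g\in C(X)$; cozero-set: its complement. A cover $\mathcal U$ of $X$ always means $X=\bigcup\mathcal U$, $X\notin\mathcal U$; $\gamma$-cover: infinite, each point in all but finitely many members. $\Gamma_F$: $\gamma$-covers $\mathcal U$ of $X$ by cozero-sets for which there are zero-sets $F(U)\subseteq U$ ($U\in\mathcal U$) with $\{F(U):U\in\mathcal U\}$ a $\gamma$-cover of $X$. $X\models U_{fin}(\Gamma_F,\Gamma)$: whenever $\mathcal U_n\in\Gamma_F$ ($n\in\omega$) and no $\mathcal U_n$ contains a finite subcover, there are finite $\mathcal F_n\subseteq\mathcal U_n$ such that each point of $X$ belongs to $\bigcup\mathcal F_n$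 for all but finitely many $n$. *)

theory Defs
  imports "HOL-Analysis.Analysis"
begin

definition tychonoff_space :: "'a topology \<Rightarrow> bool" where
  "tychonoff_space X \<longleftrightarrow> completely_regular_space X \<and> t1_space X"

text \<open>C(X): continuous real-valued functions on X, normalised to 0 outside the
  carrier so that distinct elements of C(X) are distinct functions on X.\<close>
definition Cfun :: "'a topology \<Rightarrow> ('a \<Rightarrow> real) set" where
  "Cfun X = {g. continuous_map X euclideanreal g \<and> (\<forall>x. x \<notin> topspace X \<longrightarrow> g x = 0)}"

definition cp_nbhd :: "'a topology \<Rightarrow> ('a \<Rightarrow> real) \<Rightarrow> 'a set \<Rightarrow> real \<Rightarrow> ('a \<Rightarrow> real) set" where
  "cp_nbhd X f K \<epsilon> = {g \<in> Cfun X. \<forall>x\<in>K. \<bar>g x - f x\<bar> < \<epsilon>}"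

text \<open>\<Gamma>_f: infinite A \<subseteq> C(X), f \<notin> A, converging to f in C_p(X)
  (every neighbourhood of f contains all but finitely many elements of A;
  it suffices to check the basic neighbourhoods).\<close>
definition Gamma_f :: "'a topology \<Rightarrow> ('a \<Rightarrow> real) \<Rightarrow> ('a \<Rightarrow> real) set set" where
  "Gamma_f X f = {A. A \<subseteq> Cfun X \<and> infinite A \<and> f \<notin> A \<and>
      (\<forall>K \<epsilon>. finite K \<and> K \<subseteq> topspace X \<and> \<epsilon> > 0 \<longrightarrow> finite (A - cp_nbhd X f K \<epsilon>))}"

definition Cp_Ufin_Gamma_f :: "'a topology \<Rightarrow> ('a \<Rightarrow> real) \<Rightarrow> bool" where
  "Cp_Ufin_Gamma_f X f \<longleftrightarrow>
     (\<forall>S :: nat \<Rightarrow> ('a \<Rightarrow> real) set. (\<forall>n. S n \<in> Gamma_f X f) \<longrightarrow>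
        (\<exists>F :: nat \<Rightarrow> ('a \<Rightarrow> real) set. (\<forall>n. finite (F n) \<and> F n \<subseteq> S n) \<and>
           (\<forall>K \<epsilon>. finite K \<and> K \<subseteq> topspace X \<and> \<epsilon> > 0 \<longrightarrow>
              (\<exists>n'. \<forall>n > n'. \<forall>x\<in>K. \<exists>g\<in>F n. \<bar>g x - f x\<bar> < \<epsilon>))))"

definition zero_set :: "'a topology \<Rightarrow> 'a set \<Rightarrow> bool" where
  "zero_set X Z \<longleftrightarrow> (\<exists>g. continuous_map X euclideanreal g \<and> Z = {x \<in> topspace X. g x = 0})"

definition cozero_set :: "'a topology \<Rightarrow> 'a set \<Rightarrow> bool" where
  "cozero_set X U \<longleftrightarrow> (\<exists>g. continuous_map X euclideanreal g \<and> U = {x \<in> topspace X. g x \<noteq> 0})"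

definition is_cover :: "'a topology \<Rightarrow> 'a set set \<Rightarrow> bool" where
  "is_cover X \<U> \<longleftrightarrow> \<Union>\<U> = topspace X \<and> topspace X \<notin> \<U>"

definition gamma_cover :: "'a topology \<Rightarrow> 'a set set \<Rightarrow> bool" where
  "gamma_cover X \<U> \<longleftrightarrow> is_cover X \<U> \<and> infinite \<U> \<and>
     (\<forall>x\<in>topspace X. finite {U \<in> \<U>. x \<notin> U})"

definition Gamma_F :: "'a topology \<Rightarrow> 'a set set set" where
  "Gamma_F X = {\<U>. gamma_cover X \<U> \<and> (\<forall>U\<in>\<U>. cozero_set X U) \<and>
     (\<exists>F. (\<forall>U\<in>\<U>. zero_set X (F U) \<and> F U \<subseteq> U) \<and> gamma_cover X (F ` \<U>))}"

definition Ufin_GammaF_Gamma :: "'a topology \<Rightarrow> bool" where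
  "Ufin_GammaF_Gamma X \<longleftrightarrow>
     (\<forall>\<U> :: nat \<Rightarrow> 'a set set.
        (\<forall>n. \<U> n \<in> Gamma_F X \<and> \<not> (\<exists>\<V>. finite \<V> \<and> \<V> \<subseteq> \<U> n \<and> \<Union>\<V> = topspace X)) \<longrightarrow>
        (\<exists>\<F> :: nat \<Rightarrow> 'a set set. (\<forall>n. finite (\<F> n) \<and> \<F> n \<subseteq> \<U> n) \<and>
           (\<forall>x\<in>topspace X. finite {n. x \<notin> \<Union>(\<F> n)})))"

end

theory Submission
  imports Defs
begin

lemma lemA:
  assumes UF: "\<U> \<in> Gamma_F X"
  shows "\<exists>S G. S \<in> Gamma_f X (\<lambda>x. 0) \<and>
     (\<forall>g\<in>S. G g \<in> \<U> \<and> (\<forall>x\<in>topspace X. g x < 1 \<longrightarrow> x \<in> G g))"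
proof -
  from UF obtain F where gc: "gamma_cover X \<U>" and coz: "\<forall>U\<in>\<U>. cozero_set X U"
    and zF: "\<forall>U\<in>\<U>. zero_set X (F U) \<and> F U \<subseteq> U" and gcF: "gamma_cover X (F ` \<U>)"
    unfolding Gamma_F_def by auto
  have "\<forall>U\<in>\<U>. \<exists>h. continuous_map X euclideanreal h \<and> F U = {x \<in> topspace X. h x = 0}"
    using zF unfolding zero_set_def by blast
  then obtain h1 where h1: "\<And>U. U\<in>\<U> \<Longrightarrow> continuous_map X euclideanreal (h1 U) \<and> F U = {x \<in> topspace X. h1 U x = 0}"
    by metis
  have "\<forall>U\<in>\<U>. \<exists>h. continuous_map X euclideanreal h \<and> U = {x \<in> topspace X. h x \<noteq> 0}"
    using coz unfolding cozero_set_def by blast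
  then obtain h2 where h2: "\<And>U. U\<in>\<U> \<Longrightarrow> continuous_map X euclideanreal (h2 U) \<and> U = {x \<in> topspace X. h2 U x \<noteq> 0}"
    by metis
  define rep where "rep V = (SOME U. U \<in> \<U> \<and> F U = V)" for V
  have rep: "rep V \<in> \<U> \<and> F (rep V) = V" if "V \<in> F ` \<U>" for V
    unfolding rep_def using that by (rule_tac someI_ex) auto
  define U' where "U' = rep ` (F ` \<U>)"
  have U'U: "U' \<subseteq> \<U>" using rep U'_def by auto
  have injrep: "inj_on rep (F ` \<U>)" by (metis inj_onI rep)
  have infFU: "infinite (F ` \<U>)" using gcF unfolding gamma_cover_def by auto
  have infU': "infinite U'" unfolding U'_def using injrep infFU finite_image_iff by blast
  define \<phi> where "\<phi> U x = (if x \<in> topspace X then \<bar>h1 U x\<bar> / (\<bar>h1 U x\<bar> + \<bar>h2 U x\<bar>) else 0)" for U x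
  have Usub: "U \<subseteq> topspace X" if "U \<in> \<U>" for U using h2[OF that] by blast
  have pos: "\<bar>h1 U x\<bar> + \<bar>h2 U x\<bar> \<noteq> 0" if "U \<in> \<U>" "x \<in> topspace X" for U x
  proof
    assume "\<bar>h1 U x\<bar> + \<bar>h2 U x\<bar> = 0"
    hence "h1 U x = 0" "h2 U x = 0" by auto
    hence "x \<in> F U" "x \<notin> U" using h1[OF that(1)] h2[OF that(1)] that(2) by auto
    thus False using zF that(1) by auto
  qed
  have cf: "\<phi> U \<in> Cfun X" if "U \<in> \<U>" for U
  proof -
    have "continuous_map X euclideanreal (\<lambda>x. \<bar>h1 U x\<bar> / (\<bar>h1 U x\<bar> + \<bar>h2 U x\<bar>))"
      using h1[OF that] h2[OF that] pos[OF that]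
      by (intro continuous_intros) auto
    then have "continuous_map X euclideanreal (\<phi> U)"
      by (rule continuous_map_eq) (simp add: \<phi>_def)
    thus ?thesis unfolding Cfun_def \<phi>_def by simp
  qed
  have phi0: "\<phi> U x = 0" if "U \<in> \<U>" "x \<in> F U" for U x
    using h1[OF that(1)] that(2) by (auto simp: \<phi>_def)
  have phi1: "x \<in> U" if "U \<in> \<U>" "x \<in> topspace X" "\<phi> U x < 1" for U x
  proof (rule ccontr)
    assume "x \<notin> U"
    hence "h2 U x = 0" using h2[OF that(1)] that(2) by auto
    moreover have "h1 U x \<noteq> 0" using pos[OF that(1,2)] calculation by auto
    ultimately have "\<phi> U x = 1" using that(2) by (simp add: \<phi>_def)
    thus False using that(3) by simp
  qed
  have phinz: "\<exists>x\<in>topspace X. \<phi> U x \<noteq> 0" if "U \<in> \<U>" for U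
  proof -
    have "topspace X \<notin> \<U>" using gc unfolding gamma_cover_def is_cover_def by auto
    with that Usub[OF that] have "U \<noteq> topspace X" by auto
    with Usub[OF that] obtain x where x: "x \<in> topspace X" "x \<notin> U" by blast
    hence "\<not> \<phi> U x < 1" using phi1 that by blast
    hence "\<phi> U x \<noteq> 0" by linarith
    thus ?thesis using x by blast
  qed
  have fin1: "finite {U \<in> U'. x \<notin> F U}" if "x \<in> topspace X" for x
  proof -
    have "finite {V \<in> F ` \<U>. x \<notin> V}" using gcF that unfolding gamma_cover_def by auto
    moreover have "{U \<in> U'. x \<notin> F U} \<subseteq> rep ` {V \<in> F ` \<U>. x \<notin> V}"
      unfolding U'_def using rep by auto
    ultimately show ?thesis using finite_subset by blast
  qed
  define S where "S = \<phi> ` U'"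
  have fin2: "finite {g \<in> S. g x \<noteq> 0}" if "x \<in> topspace X" for x
  proof -
    have "{g \<in> S. g x \<noteq> 0} \<subseteq> \<phi> ` {U \<in> U'. x \<notin> F U}"
      unfolding S_def using phi0 U'U by fastforce
    thus ?thesis using fin1[OF that] finite_subset by blast
  qed
  have SC: "S \<subseteq> Cfun X" unfolding S_def using cf U'U by auto
  have infS: "infinite S"
  proof
    assume fS: "finite S"
    have "\<forall>g\<in>S. \<exists>x\<in>topspace X. g x \<noteq> 0" unfolding S_def using phinz U'U by auto
    then obtain xg where xg: "\<And>g. g \<in> S \<Longrightarrow> xg g \<in> topspace X \<and> g (xg g) \<noteq> 0" by metis
    have "U' \<subseteq> (\<Union>g\<in>S. {U \<in> U'. xg g \<notin> F U})"
    proof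
      fix U assume U: "U \<in> U'"
      hence "\<phi> U \<in> S" unfolding S_def by auto
      moreover have "xg (\<phi> U) \<notin> F U" using xg[OF calculation] phi0 U U'U by blast
      ultimately show "U \<in> (\<Union>g\<in>S. {U \<in> U'. xg g \<notin> F U})" using U by blast
    qed
    moreover have "finite (\<Union>g\<in>S. {U \<in> U'. xg g \<notin> F U})"
      using fS fin1 xg by blast
    ultimately show False using infU' finite_subset by blast
  qed
  have z: "(\<lambda>x. 0) \<notin> S"
  proof
    assume "(\<lambda>x. 0) \<in> S"
    then obtain U where U2: "(\<lambda>x. 0) = \<phi> U" and U1: "U \<in> U'" unfolding S_def by (rule imageE)
    from phinz[OF subsetD[OF U'U U1]] obtain x where "x \<in> topspace X" "\<phi> U x \<noteq> 0" by (rule bexE)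
    moreover have "\<phi> U x = 0" using fun_cong[OF U2, of x] by simp
    ultimately show False by simp
  qed
  have conv: "finite (S - cp_nbhd X (\<lambda>x. 0) K \<epsilon>)"
    if "finite K" "K \<subseteq> topspace X" "\<epsilon> > 0" for K \<epsilon>
  proof -
    have "S - cp_nbhd X (\<lambda>x. 0) K \<epsilon> \<subseteq> (\<Union>x\<in>K. {g \<in> S. g x \<noteq> 0})"
      using SC that(3) unfolding cp_nbhd_def by force
    moreover have "finite (\<Union>x\<in>K. {g \<in> S. g x \<noteq> 0})" using that fin2 by blast
    ultimately show ?thesis using finite_subset by blast
  qed
  have SG: "S \<in> Gamma_f X (\<lambda>x. 0)" unfolding Gamma_f_def
    using SC infS z conv by (intro CollectI conjI allI impI) auto
  define G where "G g = (SOME U. U \<in> U' \<and> \<phi> U = g)" for g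
  have G: "G g \<in> U' \<and> \<phi> (G g) = g" if "g \<in> S" for g
    unfolding G_def using that S_def by (rule_tac someI_ex) auto
  show ?thesis
  proof (intro exI conjI ballI impI)
    show "S \<in> Gamma_f X (\<lambda>x. 0)" by (rule SG)
    fix g assume g: "g \<in> S"
    show "G g \<in> \<U>" using G[OF g] U'U by blast
    fix x assume x: "x \<in> topspace X" and lt: "g x < 1"
    have "\<phi> (G g) x < 1" using G[OF g] lt by simp
    thus "x \<in> G g" using phi1[of "G g" x] G[OF g] U'U x by blast
  qed
qed

lemma fin_sub_image:
  assumes "finite V" "V \<subseteq> h ` S"
  shows "\<exists>F. finite F \<and> F \<subseteq> S \<and> h ` F = V"
  using assms finite_subset_image by metis

lemma lemB:
  fixes f :: "'a \<Rightarrow> real" and r :: real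
  assumes fC: "f \<in> Cfun X" and SG: "S \<in> Gamma_f X f" and r: "r > 0"
    and nfs: "\<not> (\<exists>\<V>. finite \<V> \<and> \<V> \<subseteq> (\<lambda>g. {x \<in> topspace X. \<bar>g x - f x\<bar> < r}) ` S \<and> \<Union>\<V> = topspace X)"
  shows "(\<lambda>g. {x \<in> topspace X. \<bar>g x - f x\<bar> < r}) ` S \<in> Gamma_F X"
proof -
  define Ug where "Ug g = {x \<in> topspace X. \<bar>g x - f x\<bar> < r}" for g
  define \<U> where "\<U> = Ug ` S"
  have nfs': "\<not> (\<exists>\<V>. finite \<V> \<and> \<V> \<subseteq> \<U> \<and> \<Union>\<V> = topspace X)"
    using nfs unfolding \<U>_def Ug_def by simp
  have SC: "S \<subseteq> Cfun X" and infS: "infinite S"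
    and conv: "\<And>K \<epsilon>. finite K \<Longrightarrow> K \<subseteq> topspace X \<Longrightarrow> \<epsilon> > 0 \<Longrightarrow> finite (S - cp_nbhd X f K \<epsilon>)"
    using SG unfolding Gamma_f_def by auto
  have contf: "continuous_map X euclideanreal f" using fC unfolding Cfun_def by auto
  have contg: "continuous_map X euclideanreal g" if "g \<in> S" for g
    using SC that unfolding Cfun_def by auto
  have bad: "{g \<in> S. \<not> \<bar>g x - f x\<bar> < e} \<subseteq> S - cp_nbhd X f {x} e" for x e
    unfolding cp_nbhd_def by auto
  have finbad: "finite {g \<in> S. \<not> \<bar>g x - f x\<bar> < e}" if "x \<in> topspace X" "e > 0" for x e
    using conv[of "{x}" e] that bad finite_subset by blast
  have Usub: "\<Union>\<U> \<subseteq> topspace X" unfolding \<U>_def Ug_def by auto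
  have cov: "\<Union>\<U> = topspace X"
  proof
    show "topspace X \<subseteq> \<Union>\<U>"
    proof
      fix x assume x: "x \<in> topspace X"
      have "\<not> S \<subseteq> {g \<in> S. \<not> \<bar>g x - f x\<bar> < r}" using finbad[OF x r] infS finite_subset by blast
      then obtain g where "g \<in> S" "\<bar>g x - f x\<bar> < r" by blast
      thus "x \<in> \<Union>\<U>" using x unfolding \<U>_def Ug_def by blast
    qed
  qed (rule Usub)
  have notX: "topspace X \<notin> \<U>" using nfs'[unfolded not_ex, rule_format, of "{topspace X}"] by auto
  have infU: "infinite \<U>" using nfs' cov by blast
  have finU: "finite {U \<in> \<U>. x \<notin> U}" if x: "x \<in> topspace X" for x
  proof -
    have "{U \<in> \<U>. x \<notin> U} \<subseteq> Ug ` {g \<in> S. \<not> \<bar>g x - f x\<bar> < r}"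
      unfolding \<U>_def Ug_def using x by auto
    thus ?thesis using finbad[OF x r] finite_subset by blast
  qed
  have gU: "gamma_cover X \<U>" unfolding gamma_cover_def is_cover_def using cov notX infU finU by blast
  have cz: "cozero_set X U" if UU: "U \<in> \<U>" for U
  proof -
    obtain g where g: "g \<in> S" "U = Ug g" using UU unfolding \<U>_def by auto
    have "continuous_map X euclideanreal (\<lambda>x. max (r - \<bar>g x - f x\<bar>) 0)"
      using contg[OF g(1)] contf by (intro continuous_intros) auto
    moreover have "U = {x \<in> topspace X. max (r - \<bar>g x - f x\<bar>) 0 \<noteq> 0}"
      using g(2) unfolding Ug_def by auto
    ultimately show ?thesis unfolding cozero_set_def by blast
  qed
  define rep where "rep U = (SOME g. g \<in> S \<and> Ug g = U)" for U
  have rep: "rep U \<in> S \<and> Ug (rep U) = U" if UU: "U \<in> \<U>" for U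
  proof -
    from UU have "\<exists>g. g \<in> S \<and> Ug g = U" unfolding \<U>_def by auto
    from someI_ex[OF this] show ?thesis by (simp only: rep_def)
  qed
  define FF where "FF U = {x \<in> topspace X. \<bar>rep U x - f x\<bar> \<le> r/2}" for U
  have FFsub: "FF U \<subseteq> U" if UU: "U \<in> \<U>" for U
  proof
    fix x assume "x \<in> FF U"
    hence "x \<in> topspace X" "\<bar>rep U x - f x\<bar> < r" using r unfolding FF_def by auto
    hence "x \<in> Ug (rep U)" unfolding Ug_def by blast
    thus "x \<in> U" using rep[OF UU] by simp
  qed
  have zs: "zero_set X (FF U)" if "U \<in> \<U>" for U
  proof -
    have "continuous_map X euclideanreal (\<lambda>x. max (\<bar>rep U x - f x\<bar> - r/2) 0)"
    proof -
      have "continuous_map X euclideanreal (rep U)" using contg rep[OF that] by blast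
      thus ?thesis using contf by (intro continuous_intros) auto
    qed
    moreover have "FF U = {x \<in> topspace X. max (\<bar>rep U x - f x\<bar> - r/2) 0 = 0}"
      unfolding FF_def by (auto simp: max_def split: if_splits)
    ultimately show ?thesis unfolding zero_set_def by blast
  qed
  have finFF: "finite {U \<in> \<U>. x \<notin> FF U}" if x: "x \<in> topspace X" for x
  proof -
    have "{U \<in> \<U>. x \<notin> FF U} \<subseteq> Ug ` {g \<in> S. \<not> \<bar>g x - f x\<bar> < r/2}"
    proof
      fix U assume U: "U \<in> {U \<in> \<U>. x \<notin> FF U}"
      hence U1: "U \<in> \<U>" "x \<notin> FF U" by auto
      hence "rep U \<in> {g \<in> S. \<not> \<bar>g x - f x\<bar> < r/2}" using rep[OF U1(1)] x unfolding FF_def by auto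
      moreover have "U = Ug (rep U)" using rep[OF U1(1)] by simp
      ultimately show "U \<in> Ug ` {g \<in> S. \<not> \<bar>g x - f x\<bar> < r/2}" by blast
    qed
    moreover have "finite {g \<in> S. \<not> \<bar>g x - f x\<bar> < r/2}" using finbad[OF x, of "r/2"] r by simp
    ultimately show ?thesis by (rule finite_subset[OF _ finite_imageI])
  qed
  have covFF: "\<Union>(FF ` \<U>) = topspace X"
  proof
    show "\<Union>(FF ` \<U>) \<subseteq> topspace X" unfolding FF_def by auto
    show "topspace X \<subseteq> \<Union>(FF ` \<U>)"
    proof
      fix x assume x: "x \<in> topspace X"
      have "\<not> \<U> \<subseteq> {U \<in> \<U>. x \<notin> FF U}" using infU rev_finite_subset[OF finFF[OF x]] by blast
      thus "x \<in> \<Union>(FF ` \<U>)" by blast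
    qed
  qed
  have notXF: "topspace X \<notin> FF ` \<U>"
  proof
    assume "topspace X \<in> FF ` \<U>"
    then obtain U where "U \<in> \<U>" "FF U = topspace X" by auto
    hence "U = topspace X" using FFsub[of U] Usub by auto
    thus False using notX \<open>U \<in> \<U>\<close> by simp
  qed
  have infFF: "infinite (FF ` \<U>)"
  proof
    assume fin: "finite (FF ` \<U>)"
    define pre where "pre W = (SOME U. U \<in> \<U> \<and> FF U = W)" for W
    have pre: "pre W \<in> \<U> \<and> FF (pre W) = W" if "W \<in> FF ` \<U>" for W
    proof -
      from that have "\<exists>U. U \<in> \<U> \<and> FF U = W" by blast
      from someI_ex[OF this] show ?thesis by (simp only: pre_def)
    qed
    have "finite (pre ` FF ` \<U>)" using fin by simp
    moreover have "pre ` FF ` \<U> \<subseteq> \<U>"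
    proof
      fix y assume "y \<in> pre ` FF ` \<U>"
      then obtain W where "W \<in> FF ` \<U>" "y = pre W" by blast
      thus "y \<in> \<U>" using pre by simp
    qed
    moreover have "\<Union>(pre ` FF ` \<U>) = topspace X"
    proof
      show "\<Union>(pre ` FF ` \<U>) \<subseteq> topspace X" using calculation(2) Usub by blast
      show "topspace X \<subseteq> \<Union>(pre ` FF ` \<U>)"
      proof
        fix x assume "x \<in> topspace X"
        then obtain W where W: "W \<in> FF ` \<U>" "x \<in> W" using covFF by blast
        hence "x \<in> pre W" using pre[OF W(1)] FFsub[of "pre W"] by blast
        thus "x \<in> \<Union>(pre ` FF ` \<U>)" using W by blast
      qed
    qed
    ultimately show False using nfs'[unfolded not_ex, rule_format, of "pre ` FF ` \<U>"] by blast
  qed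
  have finFF2: "finite {W \<in> FF ` \<U>. x \<notin> W}" if x: "x \<in> topspace X" for x
  proof -
    have "{W \<in> FF ` \<U>. x \<notin> W} \<subseteq> FF ` {U \<in> \<U>. x \<notin> FF U}" by auto
    thus ?thesis by (rule finite_subset[OF _ finite_imageI[OF finFF[OF x]]])
  qed
  have "gamma_cover X (FF ` \<U>)" unfolding gamma_cover_def is_cover_def
    using covFF notXF infFF finFF2 by simp
  hence "\<U> \<in> Gamma_F X" unfolding Gamma_F_def using gU cz zs FFsub by (intro CollectI conjI ballI exI[of _ FF]) auto
  thus ?thesis unfolding \<U>_def Ug_def by simp
qed

lemma dir1:
  assumes H: "\<forall>f\<in>Cfun X. Cp_Ufin_Gamma_f X f"
  shows "Ufin_GammaF_Gamma X"
  unfolding Ufin_GammaF_Gamma_def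
proof (intro allI impI)
  fix \<U> :: "nat \<Rightarrow> 'a set set"
  assume A: "\<forall>n. \<U> n \<in> Gamma_F X \<and> \<not> (\<exists>\<V>. finite \<V> \<and> \<V> \<subseteq> \<U> n \<and> \<Union>\<V> = topspace X)"
  have "\<forall>n. \<exists>S. \<exists>G. S \<in> Gamma_f X (\<lambda>x. 0) \<and>
     (\<forall>g\<in>S. G g \<in> \<U> n \<and> (\<forall>x\<in>topspace X. g x < 1 \<longrightarrow> x \<in> G g))"
  proof
    fix n
    from A have "\<U> n \<in> Gamma_F X" by blast
    thus "\<exists>S. \<exists>G. S \<in> Gamma_f X (\<lambda>x. 0) \<and>
     (\<forall>g\<in>S. G g \<in> \<U> n \<and> (\<forall>x\<in>topspace X. g x < 1 \<longrightarrow> x \<in> G g))" by (rule lemA)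
  qed
  then have "\<exists>S. \<forall>n. \<exists>G. S n \<in> Gamma_f X (\<lambda>x. 0) \<and>
     (\<forall>g\<in>S n. G g \<in> \<U> n \<and> (\<forall>x\<in>topspace X. g x < 1 \<longrightarrow> x \<in> G g))" by (rule choice)
  then obtain S where "\<forall>n. \<exists>G. S n \<in> Gamma_f X (\<lambda>x. 0) \<and>
     (\<forall>g\<in>S n. G g \<in> \<U> n \<and> (\<forall>x\<in>topspace X. g x < 1 \<longrightarrow> x \<in> G g))" by (rule exE)
  then have "\<exists>G. \<forall>n. S n \<in> Gamma_f X (\<lambda>x. 0) \<and>
     (\<forall>g\<in>S n. G n g \<in> \<U> n \<and> (\<forall>x\<in>topspace X. g x < 1 \<longrightarrow> x \<in> G n g))" by (rule choice)
  then obtain G where SGall: "\<forall>n. S n \<in> Gamma_f X (\<lambda>x. 0) \<and>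
     (\<forall>g\<in>S n. G n g \<in> \<U> n \<and> (\<forall>x\<in>topspace X. g x < 1 \<longrightarrow> x \<in> G n g))" by (rule exE)
  have SG': "\<forall>n. S n \<in> Gamma_f X (\<lambda>x. 0)" using SGall by blast
  have G: "\<And>n g. g \<in> S n \<Longrightarrow> G n g \<in> \<U> n \<and> (\<forall>x\<in>topspace X. g x < 1 \<longrightarrow> x \<in> G n g)"
    using SGall by blast
  have z: "(\<lambda>x. 0::real) \<in> Cfun X" unfolding Cfun_def by simp
  have Cp: "Cp_Ufin_Gamma_f X (\<lambda>x. 0)" using H z by (rule bspec)
  have "\<exists>F :: nat \<Rightarrow> ('a \<Rightarrow> real) set. (\<forall>n. finite (F n) \<and> F n \<subseteq> S n) \<and>
           (\<forall>K \<epsilon>. finite K \<and> K \<subseteq> topspace X \<and> \<epsilon> > 0 \<longrightarrow>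
              (\<exists>n'. \<forall>n > n'. \<forall>x\<in>K. \<exists>g\<in>F n. \<bar>g x - 0\<bar> < \<epsilon>))"
    using mp[OF spec[where x=S, OF Cp[unfolded Cp_Ufin_Gamma_f_def]] SG'] .
  then obtain F where FF: "(\<forall>n. finite (F n) \<and> F n \<subseteq> S n) \<and>
           (\<forall>K \<epsilon>. finite K \<and> K \<subseteq> topspace X \<and> \<epsilon> > 0 \<longrightarrow>
              (\<exists>n'. \<forall>n > n'. \<forall>x\<in>K. \<exists>g\<in>F n. \<bar>g x - 0\<bar> < \<epsilon>))" by (rule exE)
  note F = spec[OF conjunct1[OF FF]]
  note conv0 = conjunct2[OF FF]
  show "\<exists>\<F>. (\<forall>n. finite (\<F> n) \<and> \<F> n \<subseteq> \<U> n) \<and> (\<forall>x\<in>topspace X. finite {n. x \<notin> \<Union> (\<F> n)})"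
  proof (intro exI[of _ "\<lambda>n. G n ` F n"] conjI allI ballI)
    fix n
    show "finite (G n ` F n)" using F by simp
    show "G n ` F n \<subseteq> \<U> n" using F[of n] G[of _ n] by blast
  next
    fix x assume x: "x \<in> topspace X"
    obtain n' where n': "\<And>n. n > n' \<Longrightarrow> \<forall>y\<in>{x}. \<exists>g\<in>F n. \<bar>g y - 0\<bar> < 1"
      using conv0[rule_format, of "{x}" 1] x by auto
    have "{n. x \<notin> \<Union> (G n ` F n)} \<subseteq> {..n'}"
    proof
      fix n assume n: "n \<in> {n. x \<notin> \<Union> (G n ` F n)}"
      show "n \<in> {..n'}"
      proof (rule ccontr)
        assume "n \<notin> {..n'}"
        hence "n > n'" by simp
        then obtain g where g: "g \<in> F n" "\<bar>g x - 0\<bar> < 1" using n' by blast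
        hence "g \<in> S n" "g x < 1" using F by auto
        hence "x \<in> G n g" using G[of g n] x by blast
        thus False using n g(1) by blast
      qed
    qed
    thus "finite {n. x \<notin> \<Union> (G n ` F n)}" by (rule finite_subset) simp
  qed
qed

lemma dir2:
  assumes U: "Ufin_GammaF_Gamma X" and fC: "f \<in> Cfun X"
  shows "Cp_Ufin_Gamma_f X f"
  unfolding Cp_Ufin_Gamma_f_def
proof (intro allI impI)
  fix S :: "nat \<Rightarrow> ('a \<Rightarrow> real) set"
  assume SG: "\<forall>n. S n \<in> Gamma_f X f"
  define r where "r n = 1 / real (Suc n)" for n
  have rpos: "r n > 0" for n unfolding r_def by simp
  define \<U> where "\<U> n = (\<lambda>g. {x \<in> topspace X. \<bar>g x - f x\<bar> < r n}) ` S n" for n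
  define N where "N = {n. \<not> (\<exists>\<V>. finite \<V> \<and> \<V> \<subseteq> \<U> n \<and> \<Union>\<V> = topspace X)}"
  have UN: "\<U> n \<in> Gamma_F X" if "n \<in> N" for n
    unfolding \<U>_def
    by (rule lemB[OF fC spec[OF SG, of n] rpos]) (use that in \<open>simp add: N_def \<U>_def\<close>)
  have subimg: "\<exists>F. finite F \<and> F \<subseteq> S n \<and> (\<forall>x\<in>\<Union>\<V>. \<exists>g\<in>F. \<bar>g x - f x\<bar> < r n)"
    if fV: "finite \<V>" and sV: "\<V> \<subseteq> \<U> n" for n \<V>
  proof -
    obtain F where F: "finite F" "F \<subseteq> S n" "(\<lambda>g. {x \<in> topspace X. \<bar>g x - f x\<bar> < r n}) ` F = \<V>"
      using fin_sub_image[OF fV sV[unfolded \<U>_def]] by blast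
    have "\<forall>x\<in>\<Union>\<V>. \<exists>g\<in>F. \<bar>g x - f x\<bar> < r n"
    proof
      fix x assume "x \<in> \<Union>\<V>"
      then obtain V where "V \<in> \<V>" "x \<in> V" by blast
      then obtain g where "g \<in> F" "V = {x \<in> topspace X. \<bar>g x - f x\<bar> < r n}" using F(3) by blast
      thus "\<exists>g\<in>F. \<bar>g x - f x\<bar> < r n" using \<open>x \<in> V\<close> by blast
    qed
    thus ?thesis using F(1,2) by blast
  qed
  have "\<forall>n. \<exists>F. n \<notin> N \<longrightarrow> (finite F \<and> F \<subseteq> S n \<and> (\<forall>x\<in>topspace X. \<exists>g\<in>F. \<bar>g x - f x\<bar> < r n))"
  proof
    fix n
    show "\<exists>F. n \<notin> N \<longrightarrow> (finite F \<and> F \<subseteq> S n \<and> (\<forall>x\<in>topspace X. \<exists>g\<in>F. \<bar>g x - f x\<bar> < r n))"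
    proof (cases "n \<in> N")
      case False
      hence "\<exists>\<V>. finite \<V> \<and> \<V> \<subseteq> \<U> n \<and> \<Union>\<V> = topspace X" unfolding N_def by (simp; meson)
      then obtain \<V> where V: "finite \<V>" "\<V> \<subseteq> \<U> n" "\<Union>\<V> = topspace X" by (elim exE conjE)
      have "\<exists>F. finite F \<and> F \<subseteq> S n \<and> (\<forall>x\<in>topspace X. \<exists>g\<in>F. \<bar>g x - f x\<bar> < r n)"
        using subimg[OF V(1,2)] unfolding V(3) .
      thus ?thesis by blast
    qed simp
  qed
  then have "\<exists>Fs. \<forall>n. n \<notin> N \<longrightarrow> (finite (Fs n) \<and> Fs n \<subseteq> S n \<and> (\<forall>x\<in>topspace X. \<exists>g\<in>Fs n. \<bar>g x - f x\<bar> < r n))"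
    by (rule choice)
  then obtain Fs where Fs0: "\<forall>n. n \<notin> N \<longrightarrow> (finite (Fs n) \<and> Fs n \<subseteq> S n \<and> (\<forall>x\<in>topspace X. \<exists>g\<in>Fs n. \<bar>g x - f x\<bar> < r n))"
    by (rule exE)
  have Fs: "finite (Fs n) \<and> Fs n \<subseteq> S n \<and> (\<forall>x\<in>topspace X. \<exists>g\<in>Fs n. \<bar>g x - f x\<bar> < r n)" if "n \<notin> N" for n
    by (rule mp[OF spec[OF Fs0] that])
  have "\<exists>\<F>. (\<forall>n\<in>N. finite (\<F> n) \<and> \<F> n \<subseteq> \<U> n) \<and> (\<forall>x\<in>topspace X. finite {n\<in>N. x \<notin> \<Union>(\<F> n)})"
  proof (cases "finite N")
    case True
    show ?thesis
      by (rule exI[of _ "\<lambda>n. {}"]) (use True in \<open>auto intro: finite_subset[of _ N]\<close>)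
  next
    case False
    define \<sigma> where "\<sigma> n = (LEAST m. m \<in> N \<and> n \<le> m)" for n
    have ex: "\<exists>m. m \<in> N \<and> n \<le> m" for n using False infinite_nat_iff_unbounded_le by blast
    have sig: "\<sigma> n \<in> N \<and> n \<le> \<sigma> n" for n unfolding \<sigma>_def by (rule LeastI_ex[OF ex])
    have sigN: "\<sigma> n = n" if "n \<in> N" for n
    proof -
      have "\<sigma> n \<le> n" unfolding \<sigma>_def by (rule Least_le) (use that in simp)
      thus ?thesis using sig[of n] by simp
    qed
    have prem: "\<forall>n. \<U> (\<sigma> n) \<in> Gamma_F X \<and> \<not> (\<exists>\<V>. finite \<V> \<and> \<V> \<subseteq> \<U> (\<sigma> n) \<and> \<Union>\<V> = topspace X)"
    proof
      fix n
      have sn: "\<sigma> n \<in> N" using sig by blast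
      have 1: "\<U> (\<sigma> n) \<in> Gamma_F X" using UN[OF sn] .
      have 2: "\<not> (\<exists>\<V>. finite \<V> \<and> \<V> \<subseteq> \<U> (\<sigma> n) \<and> \<Union>\<V> = topspace X)"
        using sn unfolding N_def by simp
      show "\<U> (\<sigma> n) \<in> Gamma_F X \<and> \<not> (\<exists>\<V>. finite \<V> \<and> \<V> \<subseteq> \<U> (\<sigma> n) \<and> \<Union>\<V> = topspace X)"
        by (rule conjI[OF 1 2])
    qed
    have "\<exists>\<F> :: nat \<Rightarrow> 'a set set. (\<forall>n. finite (\<F> n) \<and> \<F> n \<subseteq> \<U> (\<sigma> n)) \<and>
           (\<forall>x\<in>topspace X. finite {n. x \<notin> \<Union>(\<F> n)})"
      using mp[OF spec[where x="\<lambda>n. \<U> (\<sigma> n)", OF U[unfolded Ufin_GammaF_Gamma_def]] prem] .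
    then obtain \<F> where FF: "(\<forall>n. finite (\<F> n) \<and> \<F> n \<subseteq> \<U> (\<sigma> n)) \<and>
           (\<forall>x\<in>topspace X. finite {n. x \<notin> \<Union>(\<F> n)})" by (rule exE)
    show ?thesis
    proof (intro exI[of _ \<F>] conjI ballI)
      fix n assume nN: "n \<in> N"
      have "finite (\<F> n) \<and> \<F> n \<subseteq> \<U> (\<sigma> n)" using conjunct1[OF FF] by (rule spec)
      thus "finite (\<F> n)" "\<F> n \<subseteq> \<U> n" using sigN[OF nN] by simp_all
    next
      fix x assume "x \<in> topspace X"
      hence "finite {n. x \<notin> \<Union>(\<F> n)}" by (rule bspec[OF conjunct2[OF FF]])
      thus "finite {n\<in>N. x \<notin> \<Union>(\<F> n)}" by (rule finite_subset[rotated]) auto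
    qed
  qed
  then obtain \<F> where FF2: "(\<forall>n\<in>N. finite (\<F> n) \<and> \<F> n \<subseteq> \<U> n) \<and> (\<forall>x\<in>topspace X. finite {n\<in>N. x \<notin> \<Union>(\<F> n)})"
    by (rule exE)
  note FFN = bspec[OF conjunct1[OF FF2]]
  note finN = bspec[OF conjunct2[OF FF2]]
  have "\<forall>n. \<exists>F. n \<in> N \<longrightarrow> (finite F \<and> F \<subseteq> S n \<and> (\<forall>x\<in>\<Union>(\<F> n). \<exists>g\<in>F. \<bar>g x - f x\<bar> < r n))"
  proof
    fix n
    show "\<exists>F. n \<in> N \<longrightarrow> (finite F \<and> F \<subseteq> S n \<and> (\<forall>x\<in>\<Union>(\<F> n). \<exists>g\<in>F. \<bar>g x - f x\<bar> < r n))"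
    proof (cases "n \<in> N")
      case True
      obtain F where F: "finite F \<and> F \<subseteq> S n \<and> (\<forall>x\<in>\<Union>(\<F> n). \<exists>g\<in>F. \<bar>g x - f x\<bar> < r n)"
        using subimg[OF conjunct1[OF FFN[OF True]] conjunct2[OF FFN[OF True]]] by (rule exE)
      show ?thesis by (rule exI[of _ F], rule impI, rule F)
    qed simp
  qed
  then have "\<exists>Fn. \<forall>n. n \<in> N \<longrightarrow> (finite (Fn n) \<and> Fn n \<subseteq> S n \<and> (\<forall>x\<in>\<Union>(\<F> n). \<exists>g\<in>Fn n. \<bar>g x - f x\<bar> < r n))"
    by (rule choice)
  then obtain Fn where Fn0: "\<forall>n. n \<in> N \<longrightarrow> (finite (Fn n) \<and> Fn n \<subseteq> S n \<and> (\<forall>x\<in>\<Union>(\<F> n). \<exists>g\<in>Fn n. \<bar>g x - f x\<bar> < r n))"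
    by (rule exE)
  have Fn: "finite (Fn n) \<and> Fn n \<subseteq> S n \<and> (\<forall>x\<in>\<Union>(\<F> n). \<exists>g\<in>Fn n. \<bar>g x - f x\<bar> < r n)" if "n \<in> N" for n
    by (rule mp[OF spec[OF Fn0] that])
  define Fin where "Fin n = (if n \<in> N then Fn n else Fs n)" for n
  show "\<exists>F :: nat \<Rightarrow> ('a \<Rightarrow> real) set. (\<forall>n. finite (F n) \<and> F n \<subseteq> S n) \<and>
           (\<forall>K \<epsilon>. finite K \<and> K \<subseteq> topspace X \<and> \<epsilon> > 0 \<longrightarrow>
              (\<exists>n'. \<forall>n > n'. \<forall>x\<in>K. \<exists>g\<in>F n. \<bar>g x - f x\<bar> < \<epsilon>))"
  proof (intro exI[of _ Fin] conjI allI impI)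
    fix n
    show "finite (Fin n)" unfolding Fin_def using Fn[of n] Fs[of n] by (cases "n \<in> N") simp_all
    show "Fin n \<subseteq> S n" unfolding Fin_def using Fn[of n] Fs[of n] by (cases "n \<in> N") simp_all
  next
    fix K \<epsilon> assume KE: "finite K \<and> K \<subseteq> topspace X \<and> (\<epsilon>::real) > 0"
    obtain m :: nat where m: "1 / \<epsilon> < real m" using reals_Archimedean2 by blast
    define B where "B = (\<Union>x\<in>K. {n\<in>N. x \<notin> \<Union>(\<F> n)})"
    have "finite B" unfolding B_def using KE finN by auto
    then obtain b where b0: "\<forall>n\<in>B. n \<le> b" unfolding finite_nat_set_iff_bounded_le by (rule exE)
    note b = bspec[OF b0]
    show "\<exists>n'. \<forall>n > n'. \<forall>x\<in>K. \<exists>g\<in>Fin n. \<bar>g x - f x\<bar> < \<epsilon>"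
    proof (intro exI[of _ "max m b"] allI impI ballI)
      fix n x assume n: "max m b < n" and x: "x \<in> K"
      have xt: "x \<in> topspace X" using KE x by blast
      have rl: "r n < \<epsilon>"
      proof -
        have e: "\<epsilon> > 0" using KE by blast
        have "1 / \<epsilon> < real (Suc n)" using m n by simp
        hence "1 < real (Suc n) * \<epsilon>" using e by (simp add: divide_less_eq mult.commute)
        thus ?thesis unfolding r_def using e by (simp add: divide_less_eq mult.commute)
      qed
      show "\<exists>g\<in>Fin n. \<bar>g x - f x\<bar> < \<epsilon>"
      proof (cases "n \<in> N")
        case True
        have "n \<notin> B" using b[of n] n by linarith
        hence "x \<in> \<Union>(\<F> n)" using True x unfolding B_def by blast
        then obtain g where g: "g \<in> Fn n" "\<bar>g x - f x\<bar> < r n" using Fn[OF True] by blast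
        show ?thesis
        proof (rule bexI[of _ g])
          show "\<bar>g x - f x\<bar> < \<epsilon>" using g(2) rl by linarith
          show "g \<in> Fin n" using g(1) True unfolding Fin_def by simp
        qed
      next
        case False
        then obtain g where g: "g \<in> Fs n" "\<bar>g x - f x\<bar> < r n" using Fs[OF False] xt by blast
        show ?thesis
        proof (rule bexI[of _ g])
          show "\<bar>g x - f x\<bar> < \<epsilon>" using g(2) rl by linarith
          show "g \<in> Fin n" using g(1) False unfolding Fin_def by simp
        qed
      qed
    qed
  qed
qed

theorem mainTheorem15:
  fixes X :: "'a topology"
  assumes "tychonoff_space X"
  shows "(\<forall>f\<in>Cfun X. Cp_Ufin_Gamma_f X f) \<longleftrightarrow> Ufin_GammaF_Gamma X"
  using dir1[of X] dir2[of X] by blast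

end
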